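(* Let $X,Y$ be real $m\times n$ matrices with $\|X\|_\infty\le1$ and $\|Y\|_\infty\le1$. Let $q\ge1$ be such that $\|X\|_*\le q\sqrt{mn}$ and $\|Y\|_*\le q\sqrt{mn}$. Let $\varepsilon\in(0,1)$. Then there exist $m\times n$ matrices $A,B$ with a simultaneous block structure having at most $(20000q^6\varepsilon^{-10})^{5q^2\varepsilon^{-2}}$ blocks, and permutations $\pi$ of $\{1,\dots,m\}$ and $\tau$ of $\{1,\dots,n\}$, such that $\|X^{\pi,\tau}-A\|_{\bar F}\le\varepsilon$ and $\|Y^{\pi,\tau}-B\|_{\bar F}\le\varepsilon$. Moreover, $A,B$ can be chosen with $\|A\|_\infty\le1$ and $\|B\|_\infty\le1$.
   Context: $\|A\|_\infty=\max_{i,j}|a_{ij}|$; $\|A\|_*$ is the sum of singular values; $\|A\|_{\bar F}=\big(\frac1{mn}\sum_{i,j}a_{ij}^2\big)^{1/2}$. $X^{\pi,\tau}$ is the matrix with $(i,j)$ entry $x_{\pi(i)\tau(j)}$. A matrix is a block matrix if its entries are constant on rectangular blocks, i.e. the set of rows is partitioned into consecutive intervals and the set of columns into consecutive intervals, and the matrix is constant on each product of a row interval with a column interval (these products are the blocks). Two matrices have a simultaneous block structure if both are block matrices with respect to the same row and column partitions. *)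

theory Defs
  imports "Jordan_Normal_Form.Matrix" "Jordan_Normal_Form.Char_Poly"
    "HOL-Computational_Algebra.Polynomial" "HOL-Combinatorics.Permutations"
begin

definition max_norm :: "real mat \<Rightarrow> real" where
  "max_norm A = Max {\<bar>A $$ (i,j)\<bar> | i j. i < dim_row A \<and> j < dim_col A}"

definition singular_values :: "real mat \<Rightarrow> real multiset" where
  "singular_values A = image_mset sqrt (proots (char_poly (transpose_mat A * A)))"

definition nuclear_norm :: "real mat \<Rightarrow> real" where
  "nuclear_norm A = sum_mset (singular_values A)"

definition nfrob_norm :: "real mat \<Rightarrow> real" where
  "nfrob_norm A = sqrt ((\<Sum>i<dim_row A. \<Sum>j<dim_col A. (A $$ (i,j))^2)
                        / (real (dim_row A) * real (dim_col A)))"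

definition perm_mat :: "real mat \<Rightarrow> (nat \<Rightarrow> nat) \<Rightarrow> (nat \<Rightarrow> nat) \<Rightarrow> real mat" where
  "perm_mat X \<pi> \<tau> = mat (dim_row X) (dim_col X) (\<lambda>(i,j). X $$ (\<pi> i, \<tau> j))"

definition interval_partition :: "(nat \<Rightarrow> nat) \<Rightarrow> nat \<Rightarrow> nat \<Rightarrow> bool" where
  "interval_partition p k N \<longleftrightarrow> p 0 = 0 \<and> p k = N \<and> (\<forall>t<k. p t < p (Suc t))"

definition const_on_blocks :: "real mat \<Rightarrow> (nat \<Rightarrow> nat) \<Rightarrow> nat \<Rightarrow> (nat \<Rightarrow> nat) \<Rightarrow> nat \<Rightarrow> bool" where
  "const_on_blocks A r k c l \<longleftrightarrow>
     (\<forall>a<k. \<forall>b<l. \<forall>i i' j j'.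
        r a \<le> i \<and> i < r (Suc a) \<and> r a \<le> i' \<and> i' < r (Suc a) \<and>
        c b \<le> j \<and> j < c (Suc b) \<and> c b \<le> j' \<and> j' < c (Suc b)
        \<longrightarrow> A $$ (i,j) = A $$ (i',j'))"

definition simult_block_structure :: "real mat \<Rightarrow> real mat \<Rightarrow> nat \<Rightarrow> bool" where
  "simult_block_structure A B N \<longleftrightarrow>
     dim_row B = dim_row A \<and> dim_col B = dim_col A \<and>
     (\<exists>r k c l. interval_partition r k (dim_row A) \<and> interval_partition c l (dim_col A) \<and>
        k * l = N \<and> const_on_blocks A r k c l \<and> const_on_blocks B r k c l)"

end

theory Submission
  imports Defs
begin

lemma real_sym_eigen:
  fixes S :: "real mat"
  assumes S: "S \<in> carrier_mat n n" and n: "n > 0" and sym: "\<And>i j. i<n \<Longrightarrow> j<n \<Longrightarrow> S$$(i,j) = S$$(j,i)"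
  shows "\<exists>lam v. v \<in> carrier_vec n \<and> v \<noteq> 0\<^sub>v n \<and> S *\<^sub>v v = lam \<cdot>\<^sub>v v"
proof -
  let ?Sc = "map_mat complex_of_real S"
  have Sc: "?Sc \<in> carrier_mat n n" using S by auto
  obtain as where cp: "char_poly ?Sc = (\<Prod> a \<leftarrow> as. [:- a, 1:])" and len: "length as = n"
    using char_poly_factorized[OF Sc] by blast
  define mu where "mu = hd as"
  have "mu \<in> set as" using len n unfolding mu_def by (cases as) auto
  hence "poly (char_poly ?Sc) mu = 0" unfolding cp by (simp add: poly_prod_list_zero_iff)
  hence "eigenvalue ?Sc mu" using eigenvalue_root_char_poly[OF Sc] by simp
  then obtain z where z: "z \<in> carrier_vec n" "z \<noteq> 0\<^sub>v n" "?Sc *\<^sub>v z = mu \<cdot>\<^sub>v z"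
    unfolding eigenvalue_def eigenvector_def using Sc by auto
  have ev: "(\<Sum>j<n. complex_of_real (S$$(i,j)) * z$j) = mu * z$i" if "i<n" for i
  proof -
    have "(?Sc *\<^sub>v z) $ i = (mu \<cdot>\<^sub>v z) $ i" using z(3) by simp
    thus ?thesis using that S z(1) by (simp add: scalar_prod_def atLeast0LessThan)
  qed
  define Q where "Q = (\<Sum>i<n. cnj (z$i) * (\<Sum>j<n. complex_of_real (S$$(i,j)) * z$j))"
  define P where "P = (\<Sum>i<n. cnj (z$i) * z$i)"
  have "Q = (\<Sum>i<n. cnj (z$i) * (mu * z$i))" unfolding Q_def by (rule sum.cong, auto simp: ev)
  hence QP: "Q = mu * P" unfolding P_def by (simp add: sum_distrib_left algebra_simps)
  have "cnj Q = (\<Sum>i<n. z$i * (\<Sum>j<n. complex_of_real (S$$(i,j)) * cnj (z$j)))"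
    unfolding Q_def by (simp add: sum_distrib_left)
  also have "\<dots> = (\<Sum>i<n. \<Sum>j<n. z$i * complex_of_real (S$$(i,j)) * cnj (z$j))"
    by (simp add: sum_distrib_left mult.assoc)
  also have "\<dots> = (\<Sum>j<n. \<Sum>i<n. z$i * complex_of_real (S$$(i,j)) * cnj (z$j))"
    by (rule sum.swap)
  also have "\<dots> = Q" unfolding Q_def sum_distrib_left
    by (rule sum.cong, simp, rule sum.cong, simp, simp add: sym mult.commute mult.left_commute)
  finally have cQ: "cnj Q = Q" .
  have Preal: "P = complex_of_real (\<Sum>i<n. (cmod (z$i))^2)"
    unfolding P_def of_real_sum by (rule sum.cong, simp, simp add: complex_norm_square[symmetric] mult.commute)
  obtain i0 where i0: "i0 < n" "z$i0 \<noteq> 0" using z(1,2) by (metis carrier_vecD eq_vecI index_zero_vec(1,2))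
  have "(\<Sum>i<n. (cmod (z$i))^2) > 0"
  proof -
    have "(\<Sum>i<n. (cmod (z$i))^2) \<ge> (cmod (z$i0))^2"
      by (rule member_le_sum, insert i0, auto)
    moreover have "(cmod (z$i0))^2 > 0" using i0 by simp
    ultimately show ?thesis by linarith
  qed
  hence P0: "P \<noteq> 0" "cnj P = P" unfolding Preal proof -
    fix r :: real assume "r > 0"
    thus "complex_of_real r \<noteq> 0" "cnj (complex_of_real r) = complex_of_real r" by auto
  qed
  have "cnj mu = mu"
  proof -
    have "cnj mu * P = mu * P" using cQ QP P0 by (metis complex_cnj_mult)
    thus ?thesis using P0 by simp
  qed
  hence mur: "mu = complex_of_real (Re mu)" by (metis Reals_cnj_iff complex_is_Real_iff of_real_Re)
  have "poly (char_poly ?Sc) (complex_of_real (Re mu)) = 0" using \<open>poly (char_poly ?Sc) mu = 0\<close> mur by simp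
  hence "poly (char_poly S) (Re mu) = 0" unfolding of_real_hom.char_poly_hom[OF S] of_real_hom.poly_map_poly by simp
  hence "eigenvalue S (Re mu)" using eigenvalue_root_char_poly[OF S] by simp
  thus ?thesis unfolding eigenvalue_def eigenvector_def using S by auto
qed

lemma mult_entry:
  assumes "A \<in> carrier_mat n k" "B \<in> carrier_mat k l" "i < n" "j < l"
  shows "(A * B) $$ (i,j) = (\<Sum>x<k. A$$(i,x) * B$$(x,j))"
  using assms by (simp add: scalar_prod_def atLeast0LessThan)

definition emb :: "real \<Rightarrow> real mat \<Rightarrow> real mat" where
  "emb c B = mat (Suc (dim_row B)) (Suc (dim_col B))
     (\<lambda>(i,j). if i=0 \<and> j=0 then c else if i=0 \<or> j=0 then 0 else B$$(i-1,j-1))"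

lemma emb_dims[simp]: "dim_row (emb c B) = Suc (dim_row B)" "dim_col (emb c B) = Suc (dim_col B)"
  unfolding emb_def by auto

lemma emb_carrier[simp]: "B \<in> carrier_mat n k \<Longrightarrow> emb c B \<in> carrier_mat (Suc n) (Suc k)"
  unfolding emb_def by auto

lemma emb_index: "B \<in> carrier_mat n k \<Longrightarrow> i < Suc n \<Longrightarrow> j < Suc k \<Longrightarrow>
  emb c B $$ (i,j) = (if i=0 \<and> j=0 then c else if i=0 \<or> j=0 then 0 else B$$(i-1,j-1))"
  unfolding emb_def by auto

lemma emb_mult:
  assumes B: "B \<in> carrier_mat n k" and C: "C \<in> carrier_mat k l"
  shows "emb a B * emb b C = emb (a*b) (B*C)"
proof (rule eq_matI)
  fix i j assume i: "i < dim_row (emb (a*b) (B*C))" and j: "j < dim_col (emb (a*b) (B*C))"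
  hence i: "i < Suc n" and j: "j < Suc l" using B C by auto
  have "(emb a B * emb b C) $$ (i,j) = (\<Sum>x<Suc k. emb a B $$ (i,x) * emb b C $$ (x,j))"
    by (rule mult_entry[OF emb_carrier[OF B] emb_carrier[OF C] i j])
  also have "\<dots> = emb a B $$ (i,0) * emb b C $$ (0,j) + (\<Sum>x<k. emb a B $$ (i,Suc x) * emb b C $$ (Suc x,j))"
    by (rule sum.lessThan_Suc_shift)
  also have "\<dots> = emb (a*b) (B*C) $$ (i,j)"
  proof (cases "i = 0 \<or> j = 0")
    case True
    thus ?thesis using i j B C by (auto simp: emb_index emb_def)
  next
    case False
    then obtain i' j' where ij: "i = Suc i'" "j = Suc j'" by (metis not0_implies_Suc)
    have "(B*C)$$(i',j') = (\<Sum>x<k. B$$(i',x) * C$$(x,j'))" by (rule mult_entry[OF B C], insert i j ij, auto)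
    thus ?thesis using i j ij by (simp add: emb_index[OF mult_carrier_mat[OF B C]] emb_index[OF B] emb_index[OF C])
  qed
  finally show "(emb a B * emb b C) $$ (i,j) = emb (a*b) (B*C) $$ (i,j)" .
qed (insert B C, auto)

lemma emb_transpose: "B \<in> carrier_mat n k \<Longrightarrow> transpose_mat (emb c B) = emb c (transpose_mat B)"
  by (rule eq_matI, auto simp: emb_index)

lemma emb_one: "emb 1 (1\<^sub>m n) = 1\<^sub>m (Suc n)"
  by (rule eq_matI, auto simp: emb_def)

definition hh :: "nat \<Rightarrow> real vec \<Rightarrow> real mat" where
  "hh N u = (let w = (\<lambda>k. u$k - (if k = 0 then 1 else 0)); c = 2 / (\<Sum>k<N. (w k)^2) in
     mat N N (\<lambda>(i,j). (if i = j then 1 else 0) - c * w i * w j))"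

lemma hh_props:
  assumes u: "u \<in> carrier_vec N" and N: "N > 0" and unit: "(\<Sum>k<N. (u$k)^2) = 1"
  shows "hh N u \<in> carrier_mat N N" "transpose_mat (hh N u) = hh N u" "hh N u * hh N u = 1\<^sub>m N"
    "\<And>i. i < N \<Longrightarrow> hh N u $$ (i,0) = u$i"
proof -
  define w where "w = (\<lambda>k. u$k - (if k = 0 then (1::real) else 0))"
  define c where "c = 2 / (\<Sum>k<N. (w k)^2)"
  have H: "hh N u = mat N N (\<lambda>(i,j). (if i = j then 1 else 0) - c * w i * w j)"
    unfolding hh_def w_def c_def Let_def by simp
  show "hh N u \<in> carrier_mat N N" unfolding H by simp
  show "transpose_mat (hh N u) = hh N u" unfolding H by (rule eq_matI, auto)
  have ww: "(\<Sum>k<N. (w k)^2) = 2 - 2 * u$0"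
  proof -
    have "(\<Sum>k<N. (w k)^2) = (\<Sum>k<N. (u$k)^2) + (\<Sum>k<N. (if k = 0 then 1 - 2 * u$k else 0))"
    proof -
      have "\<And>k. (w k)^2 = (u$k)^2 + (if k = 0 then 1 - 2 * u$k else 0)"
        by (auto simp: w_def power2_eq_square algebra_simps)
      thus ?thesis by (simp add: sum.distrib)
    qed
    also have "\<dots> = 2 - 2 * u$0" using N unit by (simp add: sum.delta)
    finally show ?thesis .
  qed
  have cw: "c * (\<Sum>k<N. (w k)^2) = 2 \<or> c = 0" unfolding c_def by auto
  have wc0: "\<forall>k<N. w k = 0" if "c = 0"
  proof -
    have "(\<Sum>k<N. (w k)^2) = 0" using that unfolding c_def by simp
    hence "\<forall>k\<in>{..<N}. (w k)^2 = 0" by (subst sum_nonneg_eq_0_iff[symmetric], auto)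
    thus "\<forall>k<N. w k = 0" by auto
  qed
  show "hh N u * hh N u = 1\<^sub>m N"
  proof (rule eq_matI)
    fix i j assume ij: "i < dim_row (1\<^sub>m N)" "j < dim_col (1\<^sub>m N)"
    hence i: "i < N" and j: "j < N" by auto
    have "(hh N u * hh N u) $$ (i,j) = (\<Sum>x<N. ((if i = x then 1 else 0) - c * w i * w x) * ((if x = j then 1 else 0) - c * w x * w j))"
      by (subst mult_entry[of _ N N], insert i j, auto simp: H)
    also have "\<dots> = (\<Sum>x<N. (if i = x then 1 else 0) * (if x = j then 1 else 0)) - c * w i * w j - c * w i * w j
        + c * c * w i * w j * (\<Sum>x<N. (w x)^2)"
    proof -
      have pt: "\<And>x. ((if i = x then 1 else 0) - c * w i * w x) * ((if x = j then 1 else 0) - c * w x * w j)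
        = (if i = x then 1 else 0) * (if x = j then (1::real) else 0) - (if x = i then c * w x * w j else 0)
          - (if x = j then c * w i * w x else 0) + c * c * w i * w j * (w x)^2"
        by (auto simp: algebra_simps power2_eq_square)
      show ?thesis unfolding pt using i j
        by (simp add: sum.distrib sum_subtractf sum_distrib_left[symmetric] sum.delta)
    qed
    also have "\<dots> = (if i = j then 1 else 0)"
    proof -
      have "c * c * w i * w j * (\<Sum>x<N. (w x)^2) = 2 * c * w i * w j" using cw by auto
      moreover have "(\<Sum>x<N. (if i = x then 1 else 0) * (if x = j then (1::real) else 0)) = (if i = j then 1 else 0)"
      proof -
        have "\<And>x. (if i = x then 1 else 0) * (if x = j then (1::real) else 0) = (if x = i then (if i = j then 1 else 0) else 0)" by auto
        thus ?thesis using i by (simp add: sum.delta)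
      qed
      ultimately show ?thesis by simp
    qed
    finally show "(hh N u * hh N u) $$ (i,j) = 1\<^sub>m N $$ (i,j)" using i j by simp
  qed (auto simp: H)
  fix i assume i: "i < N"
  show "hh N u $$ (i,0) = u$i"
  proof (cases "c = 0")
    case True
    with wc0 i N have "w i = 0" "w 0 = 0" by auto
    thus ?thesis using i N unfolding H w_def by (auto split: if_splits)
  next
    case False
    hence "u$0 \<noteq> 1" unfolding c_def ww by auto
    hence c: "c = 1 / (1 - u$0)" unfolding c_def ww by (simp add: field_simps)
    have "hh N u $$ (i,0) = (if i = 0 then 1 else 0) - c * w i * (u$0 - 1)" using i N unfolding H w_def by simp
    also have "\<dots> = (if i = 0 then 1 else 0) + w i" using \<open>u$0 \<noteq> 1\<close> unfolding c by (simp add: field_simps)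
    finally show ?thesis unfolding w_def by auto
  qed
qed

lemma mv_entry:
  assumes "A \<in> carrier_mat n k" "v \<in> carrier_vec k" "i < n"
  shows "(A *\<^sub>v v) $ i = (\<Sum>x<k. A$$(i,x) * v$x)"
  using assms by (simp add: scalar_prod_def atLeast0LessThan)

lemma spectral:
  fixes S :: "real mat"
  assumes "S \<in> carrier_mat n n" "transpose_mat S = S"
  shows "\<exists>V. V \<in> carrier_mat n n \<and> transpose_mat V * V = 1\<^sub>m n \<and>
     (\<forall>i<n. \<forall>j<n. i \<noteq> j \<longrightarrow> (transpose_mat V * S * V)$$(i,j) = 0)"
  using assms
proof (induction n arbitrary: S)
  case 0
  thus ?case by (intro exI[of _ "1\<^sub>m 0"], auto)
next
  case (Suc n S)
  let ?N = "Suc n"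
  have S: "S \<in> carrier_mat ?N ?N" and St: "transpose_mat S = S" using Suc by auto
  have sym: "S$$(i,j) = S$$(j,i)" if "i < ?N" "j < ?N" for i j
    using arg_cong[OF St, of "\<lambda>M. M$$(j,i)"] that S by auto
  obtain lam v where v: "v \<in> carrier_vec ?N" "v \<noteq> 0\<^sub>v ?N" "S *\<^sub>v v = lam \<cdot>\<^sub>v v"
    using real_sym_eigen[OF S _ sym] by blast
  define nv where "nv = (\<Sum>k<?N. (v$k)^2)"
  obtain i0 where i0: "i0 < ?N" "v$i0 \<noteq> 0" using v(1,2) by (metis carrier_vecD eq_vecI index_zero_vec(1,2))
  have "nv \<ge> (v$i0)^2" unfolding nv_def by (rule member_le_sum, insert i0, auto)
  hence nv: "nv > 0" using i0 by (smt (verit) zero_less_power2)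
  define u where "u = (1 / sqrt nv) \<cdot>\<^sub>v v"
  have u: "u \<in> carrier_vec ?N" unfolding u_def using v by auto
  have Su: "S *\<^sub>v u = lam \<cdot>\<^sub>v u" unfolding u_def using v S
    by (simp add: mult_mat_vec smult_smult_assoc mult.commute)
  have unit: "(\<Sum>k<?N. (u$k)^2) = 1"
  proof -
    have "(\<Sum>k<?N. (u$k)^2) = (\<Sum>k<?N. (v$k)^2 / nv)"
      by (rule sum.cong, insert v(1) nv, auto simp: u_def power_divide)
    also have "\<dots> = 1" using nv unfolding nv_def[symmetric] sum_divide_distrib[symmetric] by simp
    finally show ?thesis .
  qed
  define H where "H = hh ?N u"
  have H: "H \<in> carrier_mat ?N ?N" "transpose_mat H = H" "H * H = 1\<^sub>m ?N" "\<And>i. i < ?N \<Longrightarrow> H $$ (i,0) = u$i"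
    using hh_props[OF u _ unit] unfolding H_def by auto
  define S1 where "S1 = H * S * H"
  have S1: "S1 \<in> carrier_mat ?N ?N" unfolding S1_def using H S by auto
  have S1t: "transpose_mat S1 = S1"
  proof -
    have "transpose_mat S1 = transpose_mat H * (transpose_mat (H * S))" unfolding S1_def
      using H S by (subst transpose_mult[of _ ?N ?N], auto)
    also have "transpose_mat (H * S) = transpose_mat S * transpose_mat H"
      using H S by (subst transpose_mult[of _ ?N ?N], auto)
    finally show ?thesis unfolding S1_def using H S St by (simp add: assoc_mult_mat[of _ ?N ?N _ ?N _ ?N])
  qed
  have S1col: "S1 $$ (i,0) = (if i = 0 then lam else 0)" if i: "i < ?N" for i
  proof -
    have HS: "H * S \<in> carrier_mat ?N ?N" using H S by auto
    have "S1 $$ (i,0) = (\<Sum>x<?N. (H*S)$$(i,x) * u$x)"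
      unfolding S1_def by (subst mult_entry[OF HS H(1) i], insert H(4), auto)
    also have "\<dots> = ((H * S) *\<^sub>v u) $ i" by (rule mv_entry[symmetric, OF HS u i])
    also have "(H * S) *\<^sub>v u = lam \<cdot>\<^sub>v (H *\<^sub>v u)" using H S u Su
      by (simp add: assoc_mult_mat_vec[of _ ?N ?N _ ?N] mult_mat_vec)
    also have "(lam \<cdot>\<^sub>v (H *\<^sub>v u)) $ i = lam * (\<Sum>x<?N. H$$(i,x) * H$$(x,0))"
      using i H u by (simp add: mv_entry[OF H(1) u i] del: sum.lessThan_Suc)
    also have "(\<Sum>x<?N. H$$(i,x) * H$$(x,0)) = (H * H) $$ (i,0)"
      by (subst mult_entry[OF H(1) H(1) i], auto)
    finally show ?thesis using H(3) i by simp
  qed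
  have S1sym: "S1$$(i,j) = S1$$(j,i)" if "i < ?N" "j < ?N" for i j
    using arg_cong[OF S1t, of "\<lambda>M. M$$(j,i)"] that S1 by auto
  define S' where "S' = mat n n (\<lambda>(i,j). S1$$(Suc i, Suc j))"
  have S': "S' \<in> carrier_mat n n" unfolding S'_def by auto
  have S't: "transpose_mat S' = S'" unfolding S'_def by (rule eq_matI, auto simp: S1sym)
  have S1emb: "S1 = emb lam S'"
  proof (rule eq_matI)
    fix i j assume "i < dim_row (emb lam S')" "j < dim_col (emb lam S')"
    hence i: "i < ?N" and j: "j < ?N" using S' by auto
    show "S1 $$ (i,j) = emb lam S' $$ (i,j)"
    proof (cases "j = 0")
      case True thus ?thesis using i S' by (simp add: emb_index S1col)
    next
      case False
      show ?thesis
      proof (cases "i = 0")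
        case True
        thus ?thesis using j False S' S1sym[OF i j] S1col[OF j] by (simp add: emb_index)
      next
        case False2: False
        then obtain i' j' where "i = Suc i'" "j = Suc j'" using False by (metis not0_implies_Suc)
        thus ?thesis using i j S' by (simp add: emb_index[OF S']) (simp add: S'_def)
      qed
    qed
  qed (insert S1 S', auto)
  obtain V' where V': "V' \<in> carrier_mat n n" "transpose_mat V' * V' = 1\<^sub>m n"
    "\<forall>i<n. \<forall>j<n. i \<noteq> j \<longrightarrow> (transpose_mat V' * S' * V')$$(i,j) = 0"
    using Suc.IH[OF S' S't] by blast
  define E where "E = emb 1 V'"
  have E: "E \<in> carrier_mat ?N ?N" "transpose_mat E = emb 1 (transpose_mat V')" unfolding E_def
    using V' by (auto simp: emb_transpose)
  define V where "V = H * E"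
  have V: "V \<in> carrier_mat ?N ?N" unfolding V_def using H E by auto
  have Vt: "transpose_mat V = transpose_mat E * H" unfolding V_def using H E
    by (simp add: transpose_mult[of _ ?N ?N])
  have ET: "transpose_mat E \<in> carrier_mat ?N ?N" using E(1) by (metis transpose_carrier_mat)
  have "transpose_mat V * V = transpose_mat E * (H * H) * E" unfolding Vt unfolding V_def using H(1) E(1) ET
    by (simp add: assoc_mult_mat[of _ ?N ?N _ ?N _ ?N])
  also have "\<dots> = transpose_mat E * E" using H(3) E(1) ET by simp
  also have "\<dots> = 1\<^sub>m ?N" unfolding E(2) unfolding E_def using V'
    by (simp add: emb_mult[of _ n n _ n] emb_one)
  finally have VV: "transpose_mat V * V = 1\<^sub>m ?N" .
  have "transpose_mat V * S * V = transpose_mat E * S1 * E" unfolding Vt unfolding V_def S1_def using H(1) E(1) ET S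
    by (simp add: assoc_mult_mat[of _ ?N ?N _ ?N _ ?N])
  also have "\<dots> = emb lam (transpose_mat V' * S' * V')" unfolding S1emb E(2) unfolding E_def
    using V' S' by (simp add: emb_mult[of _ n n _ n])
  finally have VSV: "transpose_mat V * S * V = emb lam (transpose_mat V' * S' * V')" .
  have "\<forall>i<?N. \<forall>j<?N. i \<noteq> j \<longrightarrow> (transpose_mat V * S * V)$$(i,j) = 0"
  proof (intro allI impI)
    fix i j assume ij: "i < ?N" "j < ?N" "i \<noteq> j"
    have C: "transpose_mat V' * S' * V' \<in> carrier_mat n n" using V' S' by auto
    show "(transpose_mat V * S * V)$$(i,j) = 0" unfolding VSV
      using ij V'(3) by (auto simp: emb_index[OF C])
  qed
  thus ?case using V VV by blast
qed

lemma proots_linear_prod: "proots (\<Prod>a\<leftarrow>as. [:- a, 1:]) = mset (as :: real list)"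
proof (induction as)
  case (Cons a as)
  have nz: "(\<Prod>a\<leftarrow>as. [:- a, 1:]) \<noteq> (0 :: real poly)" by (auto simp: prod_list_zero_iff)
  have "proots (\<Prod>a\<leftarrow>a # as. [:- a, 1:]) = proots [:- a, 1:] + proots (\<Prod>a\<leftarrow>as. [:- a, 1:])"
    using nz by (simp add: proots_mult del: mult_pCons_left)
  thus ?case using Cons by (simp add: proots_linear_factor)
qed simp

lemma svd_facts:
  fixes X :: "real mat"
  assumes X: "X \<in> carrier_mat m n"
  shows "\<exists>v lam.
    (\<forall>k<n. \<forall>l<n. (\<Sum>j<n. v k j * v l j) = (if k = l then 1 else 0)) \<and>
    (\<forall>j<n. \<forall>j'<n. (\<Sum>k<n. v k j * v k j') = (if j = j' then 1 else 0)) \<and>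
    (\<forall>k<n. \<forall>j<n. (\<Sum>j'<n. (\<Sum>i<m. X$$(i,j) * X$$(i,j')) * v k j') = lam k * v k j) \<and>
    nuclear_norm X = (\<Sum>k<n. sqrt (lam k))"
proof -
  have XT: "transpose_mat X \<in> carrier_mat n m" using X by auto
  define M where "M = transpose_mat X * X"
  have M: "M \<in> carrier_mat n n" unfolding M_def using X by auto
  have Mt: "transpose_mat M = M" unfolding M_def using X by (simp add: transpose_mult[of _ n m])
  obtain V where V: "V \<in> carrier_mat n n" "transpose_mat V * V = 1\<^sub>m n"
     and diag: "\<forall>i<n. \<forall>j<n. i \<noteq> j \<longrightarrow> (transpose_mat V * M * V)$$(i,j) = 0"
    using spectral[OF M Mt] by blast
  have VT: "transpose_mat V \<in> carrier_mat n n" using V by auto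
  have VV': "V * transpose_mat V = 1\<^sub>m n" by (rule mat_mult_left_right_inverse[OF VT V(1) V(2)])
  define D where "D = transpose_mat V * M * V"
  have D: "D \<in> carrier_mat n n" unfolding D_def using V M by auto
  have diagD: "\<And>i j. i < n \<Longrightarrow> j < n \<Longrightarrow> i \<noteq> j \<Longrightarrow> D$$(i,j) = 0" unfolding D_def using diag by simp
  have MVD: "M * V = V * D"
  proof -
    have "V * D = (V * transpose_mat V) * (M * V)" unfolding D_def using V VT M
      by (simp add: assoc_mult_mat[of _ n n _ n _ n])
    thus ?thesis using VV' M V by simp
  qed
  have MD: "M = V * D * transpose_mat V"
  proof -
    have "V * D * transpose_mat V = (V * transpose_mat V) * M * (V * transpose_mat V)" unfolding D_def using V VT M
      by (simp add: assoc_mult_mat[of _ n n _ n _ n])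
    thus ?thesis using VV' M V by simp
  qed
  have sim: "similar_mat M D" unfolding similar_mat_def similar_mat_wit_def
    by (rule exI[of _ V], rule exI[of _ "transpose_mat V"], insert M D V VT VV' MD, auto simp: Let_def)
  have ut: "upper_triangular D" unfolding upper_triangular_def using D diagD by auto
  have "char_poly M = (\<Prod>a\<leftarrow>diag_mat D. [:- a, 1:])"
    unfolding char_poly_similar[OF sim] by (rule char_poly_upper_triangular[OF D ut])
  hence "nuclear_norm X = sum_list (map sqrt (diag_mat D))"
    unfolding nuclear_norm_def singular_values_def M_def[symmetric]
    by (simp add: proots_linear_prod sum_mset_sum_list mset_map[symmetric] del: mset_map)
  also have "\<dots> = (\<Sum>k<n. sqrt (D$$(k,k)))" unfolding diag_mat_def using D
    by (simp add: interv_sum_list_conv_sum_set_nat atLeast0LessThan comp_def)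
  finally have nuc: "nuclear_norm X = (\<Sum>k<n. sqrt (D$$(k,k)))" .
  define v where "v = (\<lambda>k j. V$$(j,k))"
  define lam where "lam = (\<lambda>k. D$$(k,k))"
  have O1: "\<forall>k<n. \<forall>l<n. (\<Sum>j<n. v k j * v l j) = (if k = l then 1 else 0)"
  proof (intro allI impI)
    fix k l assume "k < n" "l < n"
    thus "(\<Sum>j<n. v k j * v l j) = (if k = l then 1 else 0)"
      using arg_cong[OF V(2), of "\<lambda>A. A$$(k,l)"] mult_entry[OF VT V(1), of k l] V
      unfolding v_def by auto
  qed
  have O2: "\<forall>j<n. \<forall>j'<n. (\<Sum>k<n. v k j * v k j') = (if j = j' then 1 else 0)"
  proof (intro allI impI)
    fix j j' assume "j < n" "j' < n"
    thus "(\<Sum>k<n. v k j * v k j') = (if j = j' then 1 else 0)"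
      using arg_cong[OF VV', of "\<lambda>A. A$$(j,j')"] mult_entry[OF V(1) VT, of j j'] V
      unfolding v_def by auto
  qed
  have E: "\<forall>k<n. \<forall>j<n. (\<Sum>j'<n. (\<Sum>i<m. X$$(i,j) * X$$(i,j')) * v k j') = lam k * v k j"
  proof (intro allI impI)
    fix k j assume k: "k < n" and j: "j < n"
    have "(M * V)$$(j,k) = (\<Sum>j'<n. M$$(j,j') * V$$(j',k))" by (rule mult_entry[OF M V(1) j k])
    also have "\<dots> = (\<Sum>j'<n. (\<Sum>i<m. X$$(i,j) * X$$(i,j')) * v k j')"
    proof (rule sum.cong[OF refl])
      fix j' assume "j' \<in> {..<n}"
      hence j': "j' < n" by auto
      have "M$$(j,j') = (\<Sum>i<m. transpose_mat X $$ (j,i) * X$$(i,j'))" unfolding M_def by (rule mult_entry[OF XT X j j'])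
      also have "\<dots> = (\<Sum>i<m. X$$(i,j) * X$$(i,j'))" by (rule sum.cong, insert X j, auto)
      finally show "M$$(j,j') * V$$(j',k) = (\<Sum>i<m. X$$(i,j) * X$$(i,j')) * v k j'" unfolding v_def by simp
    qed
    finally have 1: "(M * V)$$(j,k) = (\<Sum>j'<n. (\<Sum>i<m. X$$(i,j) * X$$(i,j')) * v k j')" .
    have "(V * D)$$(j,k) = (\<Sum>x<n. V$$(j,x) * D$$(x,k))" by (rule mult_entry[OF V(1) D j k])
    note 2 = this
    have "(\<Sum>x<n. V$$(j,x) * D$$(x,k)) = (\<Sum>x<n. if x = k then V$$(j,x) * D$$(x,k) else 0)"
      by (rule sum.cong[OF refl], insert diagD k, auto)
    also have "\<dots> = lam k * v k j" using k by (simp add: lam_def v_def)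
    finally have 3: "(\<Sum>x<n. V$$(j,x) * D$$(x,k)) = lam k * v k j" .
    show "(\<Sum>j'<n. (\<Sum>i<m. X$$(i,j) * X$$(i,j')) * v k j') = lam k * v k j"
      unfolding 1[symmetric] 3[symmetric] 2[symmetric] MVD ..
  qed
  have nuc': "nuclear_norm X = (\<Sum>k<n. sqrt (lam k))" unfolding lam_def by (rule nuc)
  show ?thesis by (rule exI[of _ v], rule exI[of _ lam], intro conjI O1 O2 E nuc')
qed

lemma cauchy_schwarz_sum:
  fixes f g :: "'a \<Rightarrow> real"
  shows "(\<Sum>i\<in>A. f i * g i)^2 \<le> (\<Sum>i\<in>A. (f i)^2) * (\<Sum>i\<in>A. (g i)^2)"
proof -
  let ?F = "\<Sum>i\<in>A. (f i)^2" and ?G = "\<Sum>i\<in>A. (g i)^2" and ?P = "\<Sum>i\<in>A. f i * g i"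
  have pt: "\<And>i j. (f i * g j - f j * g i)^2 = (f i)^2 * (g j)^2 + (f j)^2 * (g i)^2 - 2 * ((f i * g i) * (f j * g j))"
    by (simp add: power2_eq_square algebra_simps)
  have s1: "(\<Sum>i\<in>A. \<Sum>j\<in>A. (f i)^2 * (g j)^2) = ?F * ?G" by (simp add: sum_product)
  have s2: "(\<Sum>i\<in>A. \<Sum>j\<in>A. (f j)^2 * (g i)^2) = ?F * ?G" unfolding sum_product by (subst sum.swap) (simp add: mult.commute)
  have s3: "(\<Sum>i\<in>A. \<Sum>j\<in>A. (f i * g i) * (f j * g j)) = ?P * ?P" by (simp add: sum_product)
  have "0 \<le> (\<Sum>i\<in>A. \<Sum>j\<in>A. (f i * g j - f j * g i)^2)" by (intro sum_nonneg) auto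
  also have "\<dots> = (\<Sum>i\<in>A. \<Sum>j\<in>A. (f i)^2 * (g j)^2) + (\<Sum>i\<in>A. \<Sum>j\<in>A. (f j)^2 * (g i)^2)
      - 2 * (\<Sum>i\<in>A. \<Sum>j\<in>A. (f i * g i) * (f j * g j))"
    unfolding pt by (simp only: sum.distrib sum_subtractf sum_distrib_left)
  also have "\<dots> = 2 * (?F * ?G) - 2 * ?P^2" unfolding s1 s2 s3 by (simp add: power2_eq_square)
  finally show ?thesis by simp
qed

lemma sum4_swap:
  "(\<Sum>i\<in>I. \<Sum>j\<in>J. \<Sum>k\<in>K. \<Sum>l\<in>L. g i j k l) = (\<Sum>k\<in>K. \<Sum>l\<in>L. \<Sum>i\<in>I. \<Sum>j\<in>J. (g i j k l :: real))"
proof -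
  have "(\<Sum>i\<in>I. \<Sum>j\<in>J. \<Sum>k\<in>K. \<Sum>l\<in>L. g i j k l) = (\<Sum>i\<in>I. \<Sum>k\<in>K. \<Sum>j\<in>J. \<Sum>l\<in>L. g i j k l)"
    by (rule sum.cong[OF refl], rule sum.swap)
  also have "\<dots> = (\<Sum>i\<in>I. \<Sum>k\<in>K. \<Sum>l\<in>L. \<Sum>j\<in>J. g i j k l)"
    by (rule sum.cong[OF refl], rule sum.cong[OF refl], rule sum.swap)
  also have "\<dots> = (\<Sum>k\<in>K. \<Sum>i\<in>I. \<Sum>l\<in>L. \<Sum>j\<in>J. g i j k l)" by (rule sum.swap)
  also have "\<dots> = (\<Sum>k\<in>K. \<Sum>l\<in>L. \<Sum>i\<in>I. \<Sum>j\<in>J. g i j k l)"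
    by (rule sum.cong[OF refl], rule sum.swap)
  finally show ?thesis .
qed

lemma single_core:
  fixes x v :: "nat \<Rightarrow> nat \<Rightarrow> real" and lam :: "nat \<Rightarrow> real" and m n :: nat and q t :: real
  assumes m: "m > 0" and n: "n > 0"
    and xb: "\<And>i j. i<m \<Longrightarrow> j<n \<Longrightarrow> \<bar>x i j\<bar> \<le> 1"
    and O1: "\<forall>k<n. \<forall>l<n. (\<Sum>j<n. v k j * v l j) = (if k = l then 1 else 0)"
    and O2: "\<forall>j<n. \<forall>j'<n. (\<Sum>k<n. v k j * v k j') = (if j = j' then 1 else 0)"
    and E: "\<forall>k<n. \<forall>j<n. (\<Sum>j'<n. (\<Sum>i<m. x i j * x i j') * v k j') = lam k * v k j"
    and nuc: "(\<Sum>k<n. sqrt (lam k)) \<le> q * sqrt (real m * real n)"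
    and t: "t > 0"
  shows "\<exists>K \<alpha> \<beta>. K \<subseteq> {..<n} \<and> real (card K) \<le> q / t \<and> (\<forall>i<m. \<forall>k\<in>K. \<bar>\<alpha> i k\<bar> \<le> 1) \<and>
     (\<forall>j<n. \<forall>k\<in>K. \<bar>\<beta> j k\<bar> \<le> 1/t) \<and>
     (\<Sum>i<m. \<Sum>j<n. (x i j - (\<Sum>k\<in>K. \<alpha> i k * \<beta> j k))^2) \<le> t * q * (real m * real n)"
proof -
  define a where "a k i = (\<Sum>j<n. x i j * v k j)" for k i
  have A1: "(\<Sum>i<m. a k i * a l i) = (if k = l then lam k else 0)" if k: "k < n" and l: "l < n" for k l
  proof -
    have "(\<Sum>i<m. a k i * a l i) = (\<Sum>i<m. \<Sum>j<n. \<Sum>j'<n. x i j * v k j * (x i j' * v l j'))"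
      unfolding a_def by (simp add: sum_product)
    also have "\<dots> = (\<Sum>j<n. \<Sum>i<m. \<Sum>j'<n. x i j * v k j * (x i j' * v l j'))" by (rule sum.swap)
    also have "\<dots> = (\<Sum>j<n. \<Sum>j'<n. \<Sum>i<m. x i j * v k j * (x i j' * v l j'))"
      by (rule sum.cong[OF refl], rule sum.swap)
    also have "\<dots> = (\<Sum>j<n. v k j * (\<Sum>j'<n. (\<Sum>i<m. x i j * x i j') * v l j'))"
      by (simp add: sum_distrib_left sum_distrib_right mult_ac)
    also have "\<dots> = (\<Sum>j<n. v k j * (lam l * v l j))"
      by (rule sum.cong[OF refl], insert E l, auto)
    also have "\<dots> = lam l * (\<Sum>j<n. v k j * v l j)" by (simp add: sum_distrib_left mult_ac)
    also have "\<dots> = (if k = l then lam k else 0)" using O1 k l by auto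
    finally show ?thesis .
  qed
  have lam0: "lam k \<ge> 0" if "k < n" for k
  proof -
    have "lam k = (\<Sum>i<m. (a k i)^2)" using A1[OF that that] by (simp add: power2_eq_square)
    thus ?thesis by (simp add: sum_nonneg)
  qed
  have A2: "(\<Sum>k<n. a k i * v k j) = x i j" if i: "i < m" and j: "j < n" for i j
  proof -
    have "(\<Sum>k<n. a k i * v k j) = (\<Sum>k<n. \<Sum>j'<n. x i j' * (v k j' * v k j))"
      unfolding a_def by (simp add: sum_distrib_right sum_distrib_left mult_ac)
    also have "\<dots> = (\<Sum>j'<n. x i j' * (\<Sum>k<n. v k j' * v k j))"
      by (subst sum.swap, simp add: sum_distrib_left)
    also have "\<dots> = (\<Sum>j'<n. if j' = j then x i j' else 0)"
      by (rule sum.cong[OF refl], insert O2 j, auto)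
    also have "\<dots> = x i j" using j by simp
    finally show ?thesis .
  qed
  have B: "(\<Sum>i<m. x i j * a k i) = lam k * v k j" if k: "k < n" and j: "j < n" for k j
  proof -
    have "(\<Sum>i<m. x i j * a k i) = (\<Sum>i<m. \<Sum>j'<n. x i j * x i j' * v k j')"
      unfolding a_def by (simp add: sum_distrib_left mult_ac)
    also have "\<dots> = (\<Sum>j'<n. (\<Sum>i<m. x i j * x i j') * v k j')"
      by (subst sum.swap, simp add: sum_distrib_right)
    also have "\<dots> = lam k * v k j" using E k j by auto
    finally show ?thesis .
  qed
  have xsq: "(\<Sum>j<n. (x i j)^2) \<le> real n" if "i < m" for i
  proof -
    have "(\<Sum>j<n. (x i j)^2) \<le> (\<Sum>j<n. 1)"
      by (rule sum_mono, insert xb[OF that], simp add: abs_square_le_1)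
    thus ?thesis by simp
  qed
  have xsq': "(\<Sum>i<m. (x i j)^2) \<le> real m" if "j < n" for j
  proof -
    have "(\<Sum>i<m. (x i j)^2) \<le> (\<Sum>i<m. 1)"
      by (rule sum_mono, insert xb that, simp add: abs_square_le_1)
    thus ?thesis by simp
  qed
  have abnd: "(a k i)^2 \<le> real n" if i: "i < m" and k: "k < n" for i k
  proof -
    have "(a k i)^2 \<le> (\<Sum>j<n. (x i j)^2) * (\<Sum>j<n. (v k j)^2)"
      unfolding a_def by (rule cauchy_schwarz_sum)
    also have "(\<Sum>j<n. (v k j)^2) = 1" using O1 k by (simp add: power2_eq_square)
    finally show ?thesis using xsq[OF i] by simp
  qed
  have vbnd: "(lam k * v k j)^2 \<le> real m * lam k" if k: "k < n" and j: "j < n" for k j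
  proof -
    have "(lam k * v k j)^2 \<le> (\<Sum>i<m. (x i j)^2) * (\<Sum>i<m. (a k i)^2)"
      unfolding B[OF k j, symmetric] by (rule cauchy_schwarz_sum)
    also have "(\<Sum>i<m. (a k i)^2) = lam k" using A1[OF k k] by (simp add: power2_eq_square)
    finally show ?thesis using xsq'[OF j] lam0[OF k] by (meson mult_right_mono order_trans)
  qed
  define th where "th = t^2 * (real m * real n)"
  have th: "th > 0" unfolding th_def using t m n by simp
  have sth: "sqrt th = t * sqrt (real m * real n)" unfolding th_def using t
    by (simp add: real_sqrt_mult)
  define K where "K = {k\<in>{..<n}. th \<le> lam k}"
  define L where "L = {..<n} - K"
  have K: "K \<subseteq> {..<n}" "finite K" unfolding K_def by auto
  have card: "real (card K) \<le> q / t"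
  proof -
    have "real (card K) * sqrt th = (\<Sum>k\<in>K. sqrt th)" by simp
    also have "\<dots> \<le> (\<Sum>k\<in>K. sqrt (lam k))" by (rule sum_mono, auto simp: K_def)
    also have "\<dots> \<le> (\<Sum>k<n. sqrt (lam k))" by (rule sum_mono2, insert K lam0, auto)
    also have "\<dots> \<le> q * sqrt (real m * real n)" by (rule nuc)
    finally have "real (card K) * (t * sqrt (real m * real n)) \<le> q * sqrt (real m * real n)" unfolding sth .
    moreover have "sqrt (real m * real n) > 0" using m n by simp
    ultimately have "real (card K) * t \<le> q" by (simp add: mult.assoc[symmetric])
    thus ?thesis using t by (simp add: field_simps)
  qed
  have err_pt: "x i j - (\<Sum>k\<in>K. a k i * v k j) = (\<Sum>k\<in>L. a k i * v k j)" if "i < m" "j < n" for i j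
  proof -
    have "(\<Sum>k<n. a k i * v k j) = (\<Sum>k\<in>L. a k i * v k j) + (\<Sum>k\<in>K. a k i * v k j)"
      unfolding L_def by (rule sum.subset_diff, insert K, auto)
    thus ?thesis using A2[OF that] by simp
  qed
  have err: "(\<Sum>i<m. \<Sum>j<n. (x i j - (\<Sum>k\<in>K. a k i * v k j))^2) = (\<Sum>k\<in>L. lam k)"
  proof -
    have "(\<Sum>i<m. \<Sum>j<n. (x i j - (\<Sum>k\<in>K. a k i * v k j))^2)
        = (\<Sum>i<m. \<Sum>j<n. \<Sum>k\<in>L. \<Sum>l\<in>L. (a k i * a l i) * (v k j * v l j))"
      by (rule sum.cong[OF refl], rule sum.cong[OF refl], simp add: err_pt power2_eq_square sum_product mult_ac)
    also have "\<dots> = (\<Sum>k\<in>L. \<Sum>l\<in>L. \<Sum>i<m. \<Sum>j<n. (a k i * a l i) * (v k j * v l j))"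
      by (rule sum4_swap)
    also have "\<dots> = (\<Sum>k\<in>L. \<Sum>l\<in>L. (\<Sum>i<m. a k i * a l i) * (\<Sum>j<n. v k j * v l j))"
      by (simp add: sum_product)
    also have "\<dots> = (\<Sum>k\<in>L. \<Sum>l\<in>L. if l = k then lam k else 0)"
      by (rule sum.cong[OF refl], rule sum.cong[OF refl], insert A1 O1, auto simp: L_def)
    also have "\<dots> = (\<Sum>k\<in>L. lam k)" by (simp add: L_def)
    finally show ?thesis .
  qed
  have errb: "(\<Sum>k\<in>L. lam k) \<le> t * q * (real m * real n)"
  proof -
    have "(\<Sum>k\<in>L. lam k) \<le> (\<Sum>k\<in>L. sqrt th * sqrt (lam k))"
    proof (rule sum_mono)
      fix k assume k: "k \<in> L"
      hence "lam k < th" "lam k \<ge> 0" using lam0 unfolding L_def K_def by auto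
      hence "sqrt (lam k) \<le> sqrt th" by simp
      hence "sqrt (lam k) * sqrt (lam k) \<le> sqrt th * sqrt (lam k)" by (rule mult_right_mono) (simp add: \<open>lam k \<ge> 0\<close>)
      moreover have "sqrt (lam k) * sqrt (lam k) = lam k" using \<open>lam k \<ge> 0\<close> by simp
      ultimately show "lam k \<le> sqrt th * sqrt (lam k)" by simp
    qed
    also have "\<dots> = sqrt th * (\<Sum>k\<in>L. sqrt (lam k))" by (simp add: sum_distrib_left)
    also have "\<dots> \<le> sqrt th * (\<Sum>k<n. sqrt (lam k))"
      by (rule mult_left_mono, rule sum_mono2, insert lam0 th, auto simp: L_def)
    also have "\<dots> \<le> sqrt th * (q * sqrt (real m * real n))" by (rule mult_left_mono[OF nuc], insert th, simp)
    also have "\<dots> = t * q * (real m * real n)" unfolding sth by simp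
    finally show ?thesis .
  qed
  define \<alpha> where "\<alpha> i k = a k i / sqrt (real n)" for i k
  define \<beta> where "\<beta> j k = sqrt (real n) * v k j" for j k
  have ab: "\<alpha> i k * \<beta> j k = a k i * v k j" for i j k
    unfolding \<alpha>_def \<beta>_def using n by simp
  have \<alpha>b: "\<forall>i<m. \<forall>k\<in>K. \<bar>\<alpha> i k\<bar> \<le> 1"
  proof (intro allI impI ballI)
    fix i k assume i: "i < m" and k: "k \<in> K"
    have "(a k i)^2 \<le> real n" using abnd[OF i] k K by auto
    hence "sqrt ((a k i)^2) \<le> sqrt (real n)" by (rule real_sqrt_le_mono)
    hence "\<bar>a k i\<bar> \<le> sqrt (real n)" by simp
    moreover have "sqrt (real n) > 0" using n by simp
    ultimately show "\<bar>\<alpha> i k\<bar> \<le> 1" unfolding \<alpha>_def by (simp add: abs_divide)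
  qed
  have \<beta>b: "\<forall>j<n. \<forall>k\<in>K. \<bar>\<beta> j k\<bar> \<le> 1/t"
  proof (intro allI impI ballI)
    fix j k assume j: "j < n" and k: "k \<in> K"
    have kn: "k < n" and lk: "th \<le> lam k" using k unfolding K_def by auto
    have lp: "lam k > 0" using lk th by linarith
    have "lam k * (lam k * (v k j)^2) \<le> lam k * real m" using vbnd[OF kn j]
      by (simp add: power_mult_distrib power2_eq_square mult_ac)
    hence 1: "lam k * (v k j)^2 \<le> real m" using lp by simp
    have "th * (v k j)^2 \<le> lam k * (v k j)^2" by (rule mult_right_mono[OF lk], simp)
    hence "real m * (t^2 * real n * (v k j)^2) \<le> real m * 1" using 1 unfolding th_def by (simp add: mult_ac)
    hence 2: "t^2 * real n * (v k j)^2 \<le> 1" using m by simp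
    have "(t * \<beta> j k)^2 = t^2 * real n * (v k j)^2" unfolding \<beta>_def by (simp add: power_mult_distrib)
    hence "(t * \<beta> j k)^2 \<le> 1" using 2 by simp
    hence "\<bar>t * \<beta> j k\<bar> \<le> 1" by (simp add: abs_square_le_1)
    hence "t * \<bar>\<beta> j k\<bar> \<le> 1" using t by (simp add: abs_mult)
    thus "\<bar>\<beta> j k\<bar> \<le> 1/t" using t by (simp add: le_divide_eq mult.commute)
  qed
  have final: "(\<Sum>i<m. \<Sum>j<n. (x i j - (\<Sum>k\<in>K. \<alpha> i k * \<beta> j k))^2) \<le> t * q * (real m * real n)"
    unfolding ab using err errb by simp
  show ?thesis
    by (rule exI[of _ K], rule exI[of _ \<alpha>], rule exI[of _ \<beta>], intro conjI K(1) card \<alpha>b \<beta>b final)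
qed

lemma floor_approx:
  fixes h y :: real assumes h: "h > 0"
  shows "h * of_int \<lfloor>y / h\<rfloor> \<le> y" "y < h * of_int \<lfloor>y / h\<rfloor> + h"
proof -
  have "of_int \<lfloor>y / h\<rfloor> \<le> y / h" by (rule of_int_floor_le)
  thus "h * of_int \<lfloor>y / h\<rfloor> \<le> y" using h by (simp add: le_divide_eq mult.commute)
  have "y / h < of_int \<lfloor>y / h\<rfloor> + 1" by (rule real_of_int_floor_add_one_gt)
  thus "y < h * of_int \<lfloor>y / h\<rfloor> + h" using h by (simp add: divide_less_eq algebra_simps)
qed

lemma round_term:
  fixes a b h1 h2 B :: real
  assumes a: "\<bar>a\<bar> \<le> 1" and b: "\<bar>b\<bar> \<le> B" and h1: "h1 > 0" "h1 \<le> 1" and h2: "h2 > 0"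
  shows "\<bar>a * b - (h1 * of_int \<lfloor>a / h1\<rfloor>) * (h2 * of_int \<lfloor>b / h2\<rfloor>)\<bar> \<le> h1 * B + 2 * h2"
proof -
  define a' where "a' = h1 * of_int \<lfloor>a / h1\<rfloor>"
  define b' where "b' = h2 * of_int \<lfloor>b / h2\<rfloor>"
  have da: "\<bar>a - a'\<bar> \<le> h1" using floor_approx[OF h1(1), of a] unfolding a'_def by auto
  have db: "\<bar>b - b'\<bar> \<le> h2" using floor_approx[OF h2, of b] unfolding b'_def by auto
  have a': "\<bar>a'\<bar> \<le> 2" using da a h1 by linarith
  have "a * b - a' * b' = (a - a') * b + a' * (b - b')" by (simp add: algebra_simps)
  hence "\<bar>a * b - a' * b'\<bar> \<le> \<bar>a - a'\<bar> * \<bar>b\<bar> + \<bar>a'\<bar> * \<bar>b - b'\<bar>"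
    by (simp add: abs_mult[symmetric] abs_triangle_ineq)
  also have "\<dots> \<le> h1 * B + 2 * h2"
    by (intro add_mono mult_mono, insert da db a' b h1 h2, auto)
  finally show ?thesis unfolding a'_def b'_def .
qed

lemma round_sum:
  fixes \<alpha> \<beta> :: "nat \<Rightarrow> real" and h1 h2 B :: real
  assumes a: "\<And>k. k \<in> K \<Longrightarrow> \<bar>\<alpha> k\<bar> \<le> 1" and b: "\<And>k. k \<in> K \<Longrightarrow> \<bar>\<beta> k\<bar> \<le> B"
    and h1: "h1 > 0" "h1 \<le> 1" and h2: "h2 > 0"
  shows "\<bar>(\<Sum>k\<in>K. \<alpha> k * \<beta> k) - (\<Sum>k\<in>K. (h1 * of_int \<lfloor>\<alpha> k / h1\<rfloor>) * (h2 * of_int \<lfloor>\<beta> k / h2\<rfloor>))\<bar>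
     \<le> real (card K) * (h1 * B + 2 * h2)"
proof -
  have "\<bar>(\<Sum>k\<in>K. \<alpha> k * \<beta> k) - (\<Sum>k\<in>K. (h1 * of_int \<lfloor>\<alpha> k / h1\<rfloor>) * (h2 * of_int \<lfloor>\<beta> k / h2\<rfloor>))\<bar>
     = \<bar>\<Sum>k\<in>K. \<alpha> k * \<beta> k - (h1 * of_int \<lfloor>\<alpha> k / h1\<rfloor>) * (h2 * of_int \<lfloor>\<beta> k / h2\<rfloor>)\<bar>"
    by (simp add: sum_subtractf)
  also have "\<dots> \<le> (\<Sum>k\<in>K. \<bar>\<alpha> k * \<beta> k - (h1 * of_int \<lfloor>\<alpha> k / h1\<rfloor>) * (h2 * of_int \<lfloor>\<beta> k / h2\<rfloor>)\<bar>)"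
    by (rule sum_abs)
  also have "\<dots> \<le> (\<Sum>k\<in>K. h1 * B + 2 * h2)"
    by (rule sum_mono, rule round_term, insert a b h1 h2, auto)
  also have "\<dots> = real (card K) * (h1 * B + 2 * h2)" by simp
  finally show ?thesis .
qed

lemma floor_range:
  fixes y Y h :: real assumes "\<bar>y\<bar> \<le> Y" "h > 0"
  shows "\<lfloor>y / h\<rfloor> \<in> {- \<lceil>Y / h\<rceil> .. \<lceil>Y / h\<rceil>}"
proof -
  have "y \<le> Y" "- Y \<le> y" using assms by auto
  hence "y / h \<le> Y / h" "- Y / h \<le> y / h" using assms
    by (metis divide_right_mono less_eq_real_def)+
  hence "y / h \<le> Y / h" "- (Y / h) \<le> y / h" by auto
  hence "\<lfloor>y / h\<rfloor> \<le> \<lceil>Y / h\<rceil>" "\<lfloor>- (Y / h)\<rfloor> \<le> \<lfloor>y / h\<rfloor>"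
    by (meson floor_le_ceiling floor_mono order_trans) (meson floor_mono \<open>- (Y / h) \<le> y / h\<close>)
  thus ?thesis by (simp add: floor_minus)
qed

definition clip :: "real \<Rightarrow> real" where "clip y = max (-1) (min 1 y)"

lemma clip_props: "\<bar>clip y\<bar> \<le> 1" "\<bar>x\<bar> \<le> 1 \<Longrightarrow> \<bar>x - clip y\<bar> \<le> \<bar>x - y\<bar>"
  unfolding clip_def by auto

lemma downclosed_eq:
  fixes D :: "nat set"
  assumes fin: "finite D" and dc: "\<And>i j. i \<in> D \<Longrightarrow> j \<le> i \<Longrightarrow> j \<in> D"
  shows "D = {..<card D}"
proof (cases "D = {}")
  case True thus ?thesis by simp
next
  case False
  have "D = {..Max D}" using Max_ge[OF fin] Max_in[OF fin False] dc by auto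
  also have "\<dots> = {..<Suc (Max D)}" by auto
  finally have "D = {..<Suc (Max D)}" .
  thus ?thesis by (metis card_lessThan)
qed

lemma sort_blocks:
  fixes f :: "nat \<Rightarrow> 'a"
  shows "\<exists>\<pi> p k. \<pi> permutes {..<m} \<and> interval_partition p k m \<and> k = card (f ` {..<m}) \<and>
     (\<forall>t. p t \<le> m) \<and>
     (\<forall>t<k. \<forall>i i'. p t \<le> i \<and> i < p (Suc t) \<and> p t \<le> i' \<and> i' < p (Suc t) \<longrightarrow> f (\<pi> i) = f (\<pi> i'))"
proof -
  define C where "C = f ` {..<m}"
  define k where "k = card C"
  have finC: "finite C" unfolding C_def by simp
  obtain h0 where h0: "bij_betw h0 {0..<k} C" using ex_bij_betw_nat_finite[OF finC] unfolding k_def by blast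
  define h where "h = inv_into {0..<k} h0"
  have h: "bij_betw h C {0..<k}" unfolding h_def by (rule bij_betw_inv_into[OF h0])
  define g where "g i = h (f i)" for i
  define xs where "xs = sort_key g [0..<m]"
  have mxs: "mset xs = mset [0..<m]" unfolding xs_def by simp
  have dxs: "distinct xs" using mxs by (metis distinct_upt mset_eq_imp_distinct_iff)
  have sxs: "set xs = {..<m}" using mxs by (metis atLeast_upt set_mset_mset)
  have lxs: "length xs = m" using mxs by (metis length_upt minus_nat.diff_0 size_mset)
  have sorted: "sorted (map g xs)" unfolding xs_def by (rule sorted_sort_key)
  define \<pi> where "\<pi> i = (if i < m then xs ! i else i)" for i
  have bij1: "bij_betw ((!) xs) {..<m} {..<m}" by (rule bij_betw_nth[OF dxs], insert lxs sxs, auto)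
  have bij2: "bij_betw \<pi> {..<m} {..<m}" by (rule bij_betw_cong[THEN iffD1, OF _ bij1], auto simp: \<pi>_def)
  have perm: "\<pi> permutes {..<m}" by (rule bij_imp_permutes[OF bij2], auto simp: \<pi>_def)
  define G where "G i = g (\<pi> i)" for i
  have Gmono: "G i \<le> G i'" if "i \<le> i'" "i' < m" for i i'
  proof -
    have "map g xs ! i \<le> map g xs ! i'" by (rule sorted_nth_mono[OF sorted], insert that lxs, auto)
    thus ?thesis using that lxs unfolding G_def \<pi>_def by auto
  qed
  have pim: "\<pi> ` {..<m} = {..<m}" using bij2 by (simp add: bij_betw_def)
  have Gimg: "G ` {..<m} = {0..<k}"
  proof -
    have "G ` {..<m} = h ` f ` \<pi> ` {..<m}" unfolding G_def g_def by (auto simp: image_image)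
    also have "\<dots> = {0..<k}" unfolding pim C_def[symmetric] using h by (simp add: bij_betw_def)
    finally show ?thesis .
  qed
  define p where "p t = card {i\<in>{..<m}. G i < t}" for t
  have pset: "{i\<in>{..<m}. G i < t} = {..<p t}" for t
    unfolding p_def by (rule downclosed_eq, auto intro: le_less_trans[OF Gmono])
  have ple: "p t \<le> m" for t
  proof -
    have "p t \<le> card {..<m}" unfolding p_def by (rule card_mono, auto)
    thus ?thesis by simp
  qed
  have p0: "p 0 = 0" unfolding p_def by simp
  have pk: "p k = m"
  proof -
    have "{i\<in>{..<m}. G i < k} = {..<m}" using Gimg by auto
    thus ?thesis unfolding p_def by simp
  qed
  have pinc: "p t < p (Suc t)" if t: "t < k" for t
  proof -
    obtain i where i: "i < m" "G i = t" using Gimg t by (metis atLeastLessThan_iff imageE lessThan_iff zero_le)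
    have "{i\<in>{..<m}. G i < t} \<subset> {i\<in>{..<m}. G i < Suc t}" using i by auto
    thus ?thesis unfolding p_def by (rule psubset_card_mono[rotated], simp)
  qed
  have blk: "G i = t" if "p t \<le> i" "i < p (Suc t)" for t i
  proof -
    have "i \<in> {i\<in>{..<m}. G i < Suc t}" using that pset[of "Suc t"] by auto
    moreover have "i \<notin> {i\<in>{..<m}. G i < t}" using that pset[of t] by auto
    ultimately show ?thesis by auto
  qed
  have injh: "inj_on h C" using h by (simp add: bij_betw_def)
  have fin: "\<forall>t<k. \<forall>i i'. p t \<le> i \<and> i < p (Suc t) \<and> p t \<le> i' \<and> i' < p (Suc t) \<longrightarrow> f (\<pi> i) = f (\<pi> i')"
  proof (intro allI impI)
    fix t i i' assume "t < k" and H: "p t \<le> i \<and> i < p (Suc t) \<and> p t \<le> i' \<and> i' < p (Suc t)"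
    have "G i = G i'" using blk H by auto
    moreover have "i < m" "i' < m" using H ple[of "Suc t"] by auto
    hence "f (\<pi> i) \<in> C" "f (\<pi> i') \<in> C" using pim unfolding C_def by auto
    ultimately show "f (\<pi> i) = f (\<pi> i')" using injh unfolding G_def g_def by (meson inj_onD)
  qed
  have ip: "interval_partition p k m" unfolding interval_partition_def using p0 pk pinc by auto
  show ?thesis
    by (rule exI[of _ \<pi>], rule exI[of _ p], rule exI[of _ k], intro conjI perm ip fin allI ple, simp add: k_def C_def)
qed

lemma single_mat:
  fixes X :: "real mat"
  assumes X: "X \<in> carrier_mat m n" and m: "m > 0" and n: "n > 0"
    and xb: "\<And>i j. i<m \<Longrightarrow> j<n \<Longrightarrow> \<bar>X$$(i,j)\<bar> \<le> 1"
    and nuc: "nuclear_norm X \<le> q * sqrt (real m * real n)" and t: "t > 0"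
  shows "\<exists>K \<alpha> \<beta>. K \<subseteq> {..<n} \<and> real (card K) \<le> q / t \<and> (\<forall>i<m. \<forall>k\<in>K. \<bar>\<alpha> i k\<bar> \<le> 1) \<and>
     (\<forall>j<n. \<forall>k\<in>K. \<bar>\<beta> j k\<bar> \<le> 1/t) \<and>
     (\<Sum>i<m. \<Sum>j<n. (X$$(i,j) - (\<Sum>k\<in>K. \<alpha> i k * \<beta> j k))^2) \<le> t * q * (real m * real n)"
proof -
  obtain v lam where
    O1: "\<forall>k<n. \<forall>l<n. (\<Sum>j<n. v k j * v l j) = (if k = l then 1 else 0)" and
    O2: "\<forall>j<n. \<forall>j'<n. (\<Sum>k<n. v k j * v k j') = (if j = j' then 1 else 0)" and
    E: "\<forall>k<n. \<forall>j<n. (\<Sum>j'<n. (\<Sum>i<m. X$$(i,j) * X$$(i,j')) * v k j') = lam k * v k j" and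
    N: "nuclear_norm X = (\<Sum>k<n. sqrt (lam k))"
    using svd_facts[OF X] by blast
  show ?thesis
    by (rule single_core[of m n "\<lambda>i j. X$$(i,j)" v lam q t, OF m n xb O1 O2 E _ t], insert nuc N, auto)
qed

lemma max_norm_entry:
  assumes "A \<in> carrier_mat m n" "i < m" "j < n"
  shows "\<bar>A$$(i,j)\<bar> \<le> max_norm A"
proof -
  have eq: "{\<bar>A $$ (i,j)\<bar> | i j. i < dim_row A \<and> j < dim_col A} = (\<lambda>(i,j). \<bar>A$$(i,j)\<bar>) ` ({..<dim_row A} \<times> {..<dim_col A})"
    by auto
  show ?thesis unfolding max_norm_def eq by (rule Max_ge, simp, insert assms, force)
qed

lemma max_norm_le1:
  assumes "A \<in> carrier_mat m n" "m > 0" "n > 0" "\<And>i j. i < m \<Longrightarrow> j < n \<Longrightarrow> \<bar>A$$(i,j)\<bar> \<le> 1"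
  shows "max_norm A \<le> 1"
proof -
  have eq: "{\<bar>A $$ (i,j)\<bar> | i j. i < dim_row A \<and> j < dim_col A} = (\<lambda>(i,j). \<bar>A$$(i,j)\<bar>) ` ({..<dim_row A} \<times> {..<dim_col A})"
    by auto
  show ?thesis unfolding max_norm_def eq
    by (subst Max_le_iff, simp, insert assms, auto)
qed

lemma frob_part:
  fixes X :: "real mat" and F :: "nat \<Rightarrow> nat \<Rightarrow> real" and e :: "nat \<Rightarrow> nat \<Rightarrow> real"
  assumes X: "X \<in> carrier_mat m n" and m: "m > 0" and n: "n > 0"
    and pi: "\<pi> permutes {..<m}" and tau: "\<tau> permutes {..<n}"
    and pt: "\<And>i j. i < m \<Longrightarrow> j < n \<Longrightarrow> \<bar>X$$(i,j) - F i j\<bar> \<le> \<bar>e i j\<bar> + \<epsilon> / 3"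
    and err: "(\<Sum>i<m. \<Sum>j<n. (e i j)^2) \<le> 2/5 * \<epsilon>^2 * (real m * real n)"
    and eps: "\<epsilon> > 0"
  shows "nfrob_norm (perm_mat X \<pi> \<tau> - mat m n (\<lambda>(i,j). F (\<pi> i) (\<tau> j))) \<le> \<epsilon>"
proof -
  let ?D = "perm_mat X \<pi> \<tau> - mat m n (\<lambda>(i,j). F (\<pi> i) (\<tau> j))"
  have dims: "dim_row ?D = m" "dim_col ?D = n" using X by (auto simp: perm_mat_def)
  define g where "g i j = (X$$(i,j) - F i j)^2" for i j
  have "(\<Sum>i<m. \<Sum>j<n. (?D $$ (i,j))^2) = (\<Sum>i<m. \<Sum>j<n. g (\<pi> i) (\<tau> j))"
    by (rule sum.cong[OF refl], rule sum.cong[OF refl], insert X, auto simp: perm_mat_def g_def)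
  also have "\<dots> = (\<Sum>i<m. \<Sum>j<n. g (\<pi> i) j)"
    by (rule sum.cong[OF refl], subst sum.permute[OF tau], simp add: comp_def)
  also have "\<dots> = (\<Sum>i<m. \<Sum>j<n. g i j)"
    by (subst sum.permute[OF pi], simp add: comp_def)
  also have "\<dots> \<le> (\<Sum>i<m. \<Sum>j<n. 3/2 * (e i j)^2 + 3 * (\<epsilon>/3)^2)"
  proof (rule sum_mono, rule sum_mono)
    fix i j assume "i \<in> {..<m}" "j \<in> {..<n}"
    hence p: "\<bar>X$$(i,j) - F i j\<bar> \<le> \<bar>e i j\<bar> + \<epsilon> / 3" using pt by auto
    have "g i j = \<bar>X$$(i,j) - F i j\<bar>^2" unfolding g_def by simp
    also have "\<dots> \<le> (\<bar>e i j\<bar> + \<epsilon> / 3)^2" by (rule power_mono[OF p], simp)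
    also have "\<dots> \<le> 3/2 * (e i j)^2 + 3 * (\<epsilon>/3)^2"
    proof -
      define a where "a = \<bar>e i j\<bar>"
      define b where "b = \<epsilon> / 3"
      have h0: "0 \<le> (a - 2 * b)^2" by simp
      have h1: "(a + b)^2 = a^2 + 2*(a*b) + b^2" by (simp add: power2_eq_square algebra_simps)
      have h2: "(a - 2 * b)^2 = a^2 - 4*(a*b) + 4 * b^2" by (simp add: power2_eq_square algebra_simps)
      have h3: "a^2 = (e i j)^2" unfolding a_def by simp
      show ?thesis unfolding a_def[symmetric] b_def[symmetric] using h0 h1 h2 h3 by linarith
    qed
    finally show "g i j \<le> 3/2 * (e i j)^2 + 3 * (\<epsilon>/3)^2" .
  qed
  also have "\<dots> = 3/2 * (\<Sum>i<m. \<Sum>j<n. (e i j)^2) + (\<epsilon>^2/3) * (real m * real n)"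
    by (simp add: sum.distrib sum_distrib_left power2_eq_square)
  also have "\<dots> \<le> 3/2 * (2/5 * \<epsilon>^2 * (real m * real n)) + (\<epsilon>^2/3) * (real m * real n)"
    using err by linarith
  also have "\<dots> \<le> \<epsilon>^2 * (real m * real n)"
  proof -
    have "0 \<le> \<epsilon>^2 * (real m * real n)" by simp
    thus ?thesis by (simp add: algebra_simps)
  qed
  finally have S: "(\<Sum>i<m. \<Sum>j<n. (?D $$ (i,j))^2) \<le> \<epsilon>^2 * (real m * real n)" .
  have mn: "real m * real n > 0" using m n by simp
  have "(\<Sum>i<m. \<Sum>j<n. (?D $$ (i,j))^2) / (real m * real n) \<le> \<epsilon>^2"
    using S mn by (simp add: divide_le_eq)
  hence "sqrt ((\<Sum>i<m. \<Sum>j<n. (?D $$ (i,j))^2) / (real m * real n)) \<le> sqrt (\<epsilon>^2)"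
    by (rule real_sqrt_le_mono)
  thus ?thesis unfolding nfrob_norm_def dims using eps by simp
qed

lemma class_count:
  fixes f :: "nat \<Rightarrow> (nat \<Rightarrow> int) \<times> (nat \<Rightarrow> int)" and c :: int
  assumes K1: "finite K1" and K2: "finite K2" and c: "c \<ge> 0"
    and f: "\<And>i. i < m \<Longrightarrow> f i \<in> (PiE K1 (\<lambda>_. {-c..c})) \<times> (PiE K2 (\<lambda>_. {-c..c}))"
  shows "card (f ` {..<m}) \<le> (nat (2*c+1))^(card K1 + card K2)"
proof -
  have "card (f ` {..<m}) \<le> card ((PiE K1 (\<lambda>_. {-c..c})) \<times> (PiE K2 (\<lambda>_. {-c..c})))"
    by (rule card_mono, insert K1 K2, simp add: finite_PiE, rule image_subsetI, rule f, simp)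
  also have "\<dots> = (nat (2*c+1))^(card K1) * (nat (2*c+1))^(card K2)"
    by (simp add: card_cartesian_product card_PiE[OF K1] card_PiE[OF K2])
  also have "\<dots> = (nat (2*c+1))^(card K1 + card K2)" by (simp add: power_add)
  finally show ?thesis .
qed

lemma numerics:
  fixes q \<epsilon> :: real and r :: nat
  assumes q: "q \<ge> 1" and e: "0 < \<epsilon>" "\<epsilon> < 1"
    and r: "real r \<le> 2 * (q / (2*\<epsilon>^2/(5*q)))"
  shows "real ((nat (2 * \<lceil>1 / (2*\<epsilon>^5/(75*q^3))\<rceil> + 1) * nat (2 * \<lceil>(1 / (2*\<epsilon>^2/(5*q))) / (\<epsilon>^3/(30*q^2))\<rceil> + 1))^r)
     \<le> (20000 * q ^ 6 * \<epsilon> powr (-10)) powr (5 * q ^ 2 * \<epsilon> powr (-2))"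
proof -
  define c0 where "c0 = q^3 / \<epsilon>^5"
  have qp: "q > 0" using q by simp
  have e5: "\<epsilon>^5 \<le> 1" "\<epsilon>^5 > 0" using e by (simp_all add: power_le_one)
  have q3: "q^3 \<ge> 1" using q by (simp add: one_le_power)
  have c0: "c0 \<ge> 1" unfolding c0_def using e5 q3 by (simp add: le_divide_eq)
  have i1: "1 / (2*\<epsilon>^5/(75*q^3)) = 75/2 * c0" unfolding c0_def using qp e by (simp add: field_simps)
  have i2: "(1 / (2*\<epsilon>^2/(5*q))) / (\<epsilon>^3/(30*q^2)) = 75 * c0" unfolding c0_def using qp e
    by (simp add: field_simps power2_eq_square power3_eq_cube, simp add: eval_nat_numeral)
  define c1 where "c1 = \<lceil>75/2 * c0\<rceil>"
  define c2 where "c2 = \<lceil>75 * c0\<rceil>"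
  have c1: "c1 \<ge> 0" "real_of_int c1 \<le> 75/2 * c0 + 1" unfolding c1_def using c0 by linarith+
  have c2: "c2 \<ge> 0" "real_of_int c2 \<le> 75 * c0 + 1" unfolding c2_def using c0 by linarith+
  define G1 where "G1 = nat (2 * c1 + 1)"
  define G2 where "G2 = nat (2 * c2 + 1)"
  have G1: "real G1 \<le> 78 * c0" unfolding G1_def using c1 c0 by simp
  have G2: "real G2 \<le> 153 * c0" unfolding G2_def using c2 c0 by simp
  define B where "B = 20000 * q ^ 6 * \<epsilon> powr (-10)"
  have epow: "\<epsilon> powr (-10) = 1 / \<epsilon>^10" using e by (simp add: powr_minus powr_realpow divide_inverse)
  have c0sq: "c0^2 = q^6 * \<epsilon> powr (-10)" unfolding c0_def epow
    by (simp add: power_divide power_mult[symmetric])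
  have GG: "real G1 * real G2 \<le> B"
  proof -
    have "real G1 * real G2 \<le> (78 * c0) * (153 * c0)" by (rule mult_mono[OF G1 G2], insert c0, auto)
    also have "\<dots> = 11934 * c0^2" by (simp add: power2_eq_square)
    also have "\<dots> \<le> 20000 * c0^2" by simp
    finally show ?thesis unfolding B_def c0sq by (simp add: mult.assoc)
  qed
  have B1: "B \<ge> 1"
  proof -
    have g1: "real G1 \<ge> 1" unfolding G1_def using c1 by simp
    have g2: "real G2 \<ge> 1" unfolding G2_def using c2 by simp
    have "1 * 1 \<le> real G1 * real G2" by (rule mult_mono[OF g1 g2], auto)
    thus ?thesis using GG by linarith
  qed
  have rr: "real r \<le> 5 * q ^ 2 * \<epsilon> powr (-2)"
  proof -
    have ep2: "\<epsilon> powr (-2) = 1 / \<epsilon>^2" using e by (simp add: powr_minus powr_realpow divide_inverse)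
    have eq1: "5 * q ^ 2 * \<epsilon> powr (-2) = 5 * q^2 / \<epsilon>^2" unfolding ep2 by simp
    have eq2: "2 * (q / (2*\<epsilon>^2/(5*q))) = 5 * q^2 / \<epsilon>^2" using e qp by (simp add: field_simps power2_eq_square)
    show ?thesis unfolding eq1 using r eq2 by linarith
  qed
  have "real ((G1 * G2)^r) = (real G1 * real G2)^r" by simp
  also have "\<dots> \<le> B^r" by (rule power_mono[OF GG], simp)
  also have "\<dots> = B powr (real r)" using B1 by (simp add: powr_realpow)
  also have "\<dots> \<le> B powr (5 * q ^ 2 * \<epsilon> powr (-2))" by (rule powr_mono[OF rr B1])
  finally show ?thesis unfolding B_def G1_def G2_def c1_def c2_def i1 i2 .
qed

theorem lemma7p2:
  fixes X Y :: "real mat" and m n :: nat and q \<epsilon> :: real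
  assumes "m > 0" and "n > 0"
    and "X \<in> carrier_mat m n" and "Y \<in> carrier_mat m n"
    and "max_norm X \<le> 1" and "max_norm Y \<le> 1"
    and "q \<ge> 1"
    and "nuclear_norm X \<le> q * sqrt (real m * real n)"
    and "nuclear_norm Y \<le> q * sqrt (real m * real n)"
    and "0 < \<epsilon>" and "\<epsilon> < 1"
  shows "\<exists>A B N \<pi> \<tau>. A \<in> carrier_mat m n \<and> B \<in> carrier_mat m n \<and>
           simult_block_structure A B N \<and>
           real N \<le> (20000 * q ^ 6 * \<epsilon> powr (-10)) powr (5 * q ^ 2 * \<epsilon> powr (-2)) \<and>
           \<pi> permutes {..<m} \<and> \<tau> permutes {..<n} \<and>
           nfrob_norm (perm_mat X \<pi> \<tau> - A) \<le> \<epsilon> \<and>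
           nfrob_norm (perm_mat Y \<pi> \<tau> - B) \<le> \<epsilon> \<and>
           max_norm A \<le> 1 \<and> max_norm B \<le> 1"
proof -
  note m = assms(1) and n = assms(2) and X = assms(3) and Y = assms(4) and q = assms(7)
  note e = assms(10,11)
  have xb: "\<bar>X$$(i,j)\<bar> \<le> 1" if "i < m" "j < n" for i j
    using max_norm_entry[OF X that] assms(5) by linarith
  have yb: "\<bar>Y$$(i,j)\<bar> \<le> 1" if "i < m" "j < n" for i j
    using max_norm_entry[OF Y that] assms(6) by linarith
  have qp: "q > 0" using q by simp
  define t where "t = 2*\<epsilon>^2/(5*q)"
  have t: "t > 0" unfolding t_def using qp e by simp
  define h1 where "h1 = 2*\<epsilon>^5/(75*q^3)"
  define h2 where "h2 = \<epsilon>^3/(30*q^2)"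
  have h1: "h1 > 0" "h1 \<le> 1"
  proof -
    show "h1 > 0" unfolding h1_def using qp e by simp
    have "\<epsilon>^5 \<le> 1" using e by (simp add: power_le_one)
    moreover have "q^3 \<ge> 1" using q by (simp add: one_le_power)
    ultimately show "h1 \<le> 1" unfolding h1_def using qp by (simp add: divide_le_eq)
  qed
  have h2: "h2 > 0" unfolding h2_def using qp e by simp
  have key: "(q/t) * (h1 * (1/t) + 2*h2) = \<epsilon>/3" unfolding t_def h1_def h2_def using qp e
    by (simp add: field_simps power2_eq_square power3_eq_cube, simp add: eval_nat_numeral)
  have tq: "t * q = 2/5 * \<epsilon>^2" unfolding t_def using qp by simp
  obtain KX \<alpha>X \<beta>X where KX: "KX \<subseteq> {..<n}" "real (card KX) \<le> q / t"
      "\<forall>i<m. \<forall>k\<in>KX. \<bar>\<alpha>X i k\<bar> \<le> 1" "\<forall>j<n. \<forall>k\<in>KX. \<bar>\<beta>X j k\<bar> \<le> 1/t"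
      "(\<Sum>i<m. \<Sum>j<n. (X$$(i,j) - (\<Sum>k\<in>KX. \<alpha>X i k * \<beta>X j k))^2) \<le> t * q * (real m * real n)"
    using single_mat[OF X m n _ assms(8) t] xb by (metis (no_types, lifting))
  obtain KY \<alpha>Y \<beta>Y where KY: "KY \<subseteq> {..<n}" "real (card KY) \<le> q / t"
      "\<forall>i<m. \<forall>k\<in>KY. \<bar>\<alpha>Y i k\<bar> \<le> 1" "\<forall>j<n. \<forall>k\<in>KY. \<bar>\<beta>Y j k\<bar> \<le> 1/t"
      "(\<Sum>i<m. \<Sum>j<n. (Y$$(i,j) - (\<Sum>k\<in>KY. \<alpha>Y i k * \<beta>Y j k))^2) \<le> t * q * (real m * real n)"
    using single_mat[OF Y m n _ assms(9) t] yb by (metis (no_types, lifting))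
  have finKX: "finite KX" using KX(1) finite_subset by blast
  have finKY: "finite KY" using KY(1) finite_subset by blast
  define c1 where "c1 = \<lceil>1 / h1\<rceil>"
  define c2 where "c2 = \<lceil>(1/t) / h2\<rceil>"
  have c1: "c1 \<ge> 0"
  proof -
    have "1 / h1 > 0" using h1 by simp
    thus ?thesis unfolding c1_def by linarith
  qed
  have c2: "c2 \<ge> 0"
  proof -
    have "(1/t) / h2 > 0" using h2 t by simp
    thus ?thesis unfolding c2_def by linarith
  qed
  define R where "R i = (restrict (\<lambda>k. \<lfloor>\<alpha>X i k / h1\<rfloor>) KX, restrict (\<lambda>k. \<lfloor>\<alpha>Y i k / h1\<rfloor>) KY)" for i
  define Cc where "Cc j = (restrict (\<lambda>k. \<lfloor>\<beta>X j k / h2\<rfloor>) KX, restrict (\<lambda>k. \<lfloor>\<beta>Y j k / h2\<rfloor>) KY)" for j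
  define FX where "FX rc cc = clip (\<Sum>k\<in>KX. (h1 * of_int (fst rc k)) * (h2 * of_int (fst cc k)))"
    for rc cc :: "(nat \<Rightarrow> int) \<times> (nat \<Rightarrow> int)"
  define FY where "FY rc cc = clip (\<Sum>k\<in>KY. (h1 * of_int (snd rc k)) * (h2 * of_int (snd cc k)))"
    for rc cc :: "(nat \<Rightarrow> int) \<times> (nat \<Rightarrow> int)"
  obtain \<pi> pr k where pi: "\<pi> permutes {..<m}" "interval_partition pr k m" "k = card (R ` {..<m})"
      "\<forall>t. pr t \<le> m"
      "\<forall>t<k. \<forall>i i'. pr t \<le> i \<and> i < pr (Suc t) \<and> pr t \<le> i' \<and> i' < pr (Suc t) \<longrightarrow> R (\<pi> i) = R (\<pi> i')"
    using sort_blocks[of m R] by (elim exE conjE) blast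
  obtain \<tau> pc l where tau: "\<tau> permutes {..<n}" "interval_partition pc l n" "l = card (Cc ` {..<n})"
      "\<forall>t. pc t \<le> n"
      "\<forall>t<l. \<forall>j j'. pc t \<le> j \<and> j < pc (Suc t) \<and> pc t \<le> j' \<and> j' < pc (Suc t) \<longrightarrow> Cc (\<tau> j) = Cc (\<tau> j')"
    using sort_blocks[of n Cc] by (elim exE conjE) blast
  define A where "A = mat m n (\<lambda>(i,j). FX (R (\<pi> i)) (Cc (\<tau> j)))"
  define B where "B = mat m n (\<lambda>(i,j). FY (R (\<pi> i)) (Cc (\<tau> j)))"
  have A: "A \<in> carrier_mat m n" and B: "B \<in> carrier_mat m n" unfolding A_def B_def by auto
  have rnd: "real (card K) * (h1 * (1/t) + 2*h2) \<le> \<epsilon>/3" if "real (card K) \<le> q / t" for K :: "nat set"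
  proof -
    have "real (card K) * (h1 * (1/t) + 2*h2) \<le> (q/t) * (h1 * (1/t) + 2*h2)"
      by (rule mult_right_mono[OF that], insert h1 h2 t, simp)
    thus ?thesis using key by linarith
  qed
  have ptX: "\<bar>X$$(i,j) - FX (R i) (Cc j)\<bar> \<le> \<bar>X$$(i,j) - (\<Sum>k\<in>KX. \<alpha>X i k * \<beta>X j k)\<bar> + \<epsilon>/3"
    if ij: "i < m" "j < n" for i j
  proof -
    define S where "S = (\<Sum>k\<in>KX. (h1 * of_int \<lfloor>\<alpha>X i k / h1\<rfloor>) * (h2 * of_int \<lfloor>\<beta>X j k / h2\<rfloor>))"
    have FS: "FX (R i) (Cc j) = clip S" unfolding FX_def S_def R_def Cc_def
      by (rule arg_cong[of _ _ clip], rule sum.cong, auto)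
    have "\<bar>(\<Sum>k\<in>KX. \<alpha>X i k * \<beta>X j k) - S\<bar> \<le> real (card KX) * (h1 * (1/t) + 2*h2)"
      unfolding S_def by (rule round_sum, insert KX(3,4) ij h1 h2, auto)
    also have "\<dots> \<le> \<epsilon>/3" by (rule rnd[OF KX(2)])
    finally have "\<bar>(\<Sum>k\<in>KX. \<alpha>X i k * \<beta>X j k) - S\<bar> \<le> \<epsilon>/3" .
    moreover have "\<bar>X$$(i,j) - clip S\<bar> \<le> \<bar>X$$(i,j) - S\<bar>" by (rule clip_props(2)[OF xb[OF ij]])
    ultimately show ?thesis unfolding FS by linarith
  qed
  have ptY: "\<bar>Y$$(i,j) - FY (R i) (Cc j)\<bar> \<le> \<bar>Y$$(i,j) - (\<Sum>k\<in>KY. \<alpha>Y i k * \<beta>Y j k)\<bar> + \<epsilon>/3"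
    if ij: "i < m" "j < n" for i j
  proof -
    define S where "S = (\<Sum>k\<in>KY. (h1 * of_int \<lfloor>\<alpha>Y i k / h1\<rfloor>) * (h2 * of_int \<lfloor>\<beta>Y j k / h2\<rfloor>))"
    have FS: "FY (R i) (Cc j) = clip S" unfolding FY_def S_def R_def Cc_def
      by (rule arg_cong[of _ _ clip], rule sum.cong, auto)
    have "\<bar>(\<Sum>k\<in>KY. \<alpha>Y i k * \<beta>Y j k) - S\<bar> \<le> real (card KY) * (h1 * (1/t) + 2*h2)"
      unfolding S_def by (rule round_sum, insert KY(3,4) ij h1 h2, auto)
    also have "\<dots> \<le> \<epsilon>/3" by (rule rnd[OF KY(2)])
    finally have "\<bar>(\<Sum>k\<in>KY. \<alpha>Y i k * \<beta>Y j k) - S\<bar> \<le> \<epsilon>/3" .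
    moreover have "\<bar>Y$$(i,j) - clip S\<bar> \<le> \<bar>Y$$(i,j) - S\<bar>" by (rule clip_props(2)[OF yb[OF ij]])
    ultimately show ?thesis unfolding FS by linarith
  qed
  have frobX: "nfrob_norm (perm_mat X \<pi> \<tau> - A) \<le> \<epsilon>" unfolding A_def
    by (rule frob_part[OF X m n pi(1) tau(1), of "\<lambda>i j. FX (R i) (Cc j)"
          "\<lambda>i j. X$$(i,j) - (\<Sum>k\<in>KX. \<alpha>X i k * \<beta>X j k)"], rule ptX, assumption+,
        insert KX(5) tq e, auto)
  have frobY: "nfrob_norm (perm_mat Y \<pi> \<tau> - B) \<le> \<epsilon>" unfolding B_def
    by (rule frob_part[OF Y m n pi(1) tau(1), of "\<lambda>i j. FY (R i) (Cc j)"
          "\<lambda>i j. Y$$(i,j) - (\<Sum>k\<in>KY. \<alpha>Y i k * \<beta>Y j k)"], rule ptY, assumption+,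
        insert KY(5) tq e, auto)
  have maxA: "max_norm A \<le> 1"
    by (rule max_norm_le1[OF A m n], auto simp: A_def FX_def clip_props(1))
  have maxB: "max_norm B \<le> 1"
    by (rule max_norm_le1[OF B m n], auto simp: B_def FY_def clip_props(1))
  have cobA: "const_on_blocks A pr k pc l" unfolding const_on_blocks_def
  proof (intro allI impI)
    fix a b i i' j j'
    assume ab: "a < k" "b < l" and H: "pr a \<le> i \<and> i < pr (Suc a) \<and> pr a \<le> i' \<and> i' < pr (Suc a) \<and>
        pc b \<le> j \<and> j < pc (Suc b) \<and> pc b \<le> j' \<and> j' < pc (Suc b)"
    have "R (\<pi> i) = R (\<pi> i')" using pi(5) ab H by blast
    moreover have "Cc (\<tau> j) = Cc (\<tau> j')" using tau(5) ab H by blast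
    moreover have "i < m" "i' < m" "j < n" "j' < n" using H pi(4) tau(4)
      by (meson order_less_le_trans)+
    ultimately show "A $$ (i,j) = A $$ (i',j')" unfolding A_def by simp
  qed
  have cobB: "const_on_blocks B pr k pc l" unfolding const_on_blocks_def
  proof (intro allI impI)
    fix a b i i' j j'
    assume ab: "a < k" "b < l" and H: "pr a \<le> i \<and> i < pr (Suc a) \<and> pr a \<le> i' \<and> i' < pr (Suc a) \<and>
        pc b \<le> j \<and> j < pc (Suc b) \<and> pc b \<le> j' \<and> j' < pc (Suc b)"
    have "R (\<pi> i) = R (\<pi> i')" using pi(5) ab H by blast
    moreover have "Cc (\<tau> j) = Cc (\<tau> j')" using tau(5) ab H by blast
    moreover have "i < m" "i' < m" "j < n" "j' < n" using H pi(4) tau(4)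
      by (meson order_less_le_trans)+
    ultimately show "B $$ (i,j) = B $$ (i',j')" unfolding B_def by simp
  qed
  have sbs: "simult_block_structure A B (k * l)" unfolding simult_block_structure_def
    using A B pi(2) tau(2) cobA cobB
    by (intro conjI exI[of _ pr] exI[of _ k] exI[of _ pc] exI[of _ l]) auto
  have kb: "k \<le> (nat (2*c1+1))^(card KX + card KY)" unfolding pi(3)
  proof (rule class_count[OF finKX finKY c1])
    fix i assume i: "i < m"
    have "\<lfloor>\<alpha>X i k' / h1\<rfloor> \<in> {-c1..c1}" if "k' \<in> KX" for k'
      unfolding c1_def by (rule floor_range, insert KX(3) i that h1, auto)
    moreover have "\<lfloor>\<alpha>Y i k' / h1\<rfloor> \<in> {-c1..c1}" if "k' \<in> KY" for k'
      unfolding c1_def by (rule floor_range, insert KY(3) i that h1, auto)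
    ultimately show "R i \<in> (PiE KX (\<lambda>_. {-c1..c1})) \<times> (PiE KY (\<lambda>_. {-c1..c1}))"
      unfolding R_def by auto
  qed
  have lb: "l \<le> (nat (2*c2+1))^(card KX + card KY)" unfolding tau(3)
  proof (rule class_count[OF finKX finKY c2])
    fix j assume j: "j < n"
    have "\<lfloor>\<beta>X j k' / h2\<rfloor> \<in> {-c2..c2}" if "k' \<in> KX" for k'
      unfolding c2_def by (rule floor_range, insert KX(4) j that h2, auto)
    moreover have "\<lfloor>\<beta>Y j k' / h2\<rfloor> \<in> {-c2..c2}" if "k' \<in> KY" for k'
      unfolding c2_def by (rule floor_range, insert KY(4) j that h2, auto)
    ultimately show "Cc j \<in> (PiE KX (\<lambda>_. {-c2..c2})) \<times> (PiE KY (\<lambda>_. {-c2..c2}))"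
      unfolding Cc_def by auto
  qed
  have Nb: "k * l \<le> (nat (2*c1+1) * nat (2*c2+1))^(card KX + card KY)"
    unfolding power_mult_distrib by (rule mult_le_mono[OF kb lb])
  have rb: "real (card KX + card KY) \<le> 2 * (q / (2*\<epsilon>^2/(5*q)))" using KX(2) KY(2) unfolding t_def by simp
  have "real (k * l) \<le> real ((nat (2*c1+1) * nat (2*c2+1))^(card KX + card KY))"
    using Nb by (simp only: of_nat_le_iff)
  also have "\<dots> \<le> (20000 * q ^ 6 * \<epsilon> powr (-10)) powr (5 * q ^ 2 * \<epsilon> powr (-2))"
    unfolding c1_def c2_def h1_def h2_def t_def by (rule numerics[OF q e rb])
  finally have bound: "real (k * l) \<le> (20000 * q ^ 6 * \<epsilon> powr (-10)) powr (5 * q ^ 2 * \<epsilon> powr (-2))" .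
  show ?thesis
    by (rule exI[of _ A], rule exI[of _ B], rule exI[of _ "k * l"], rule exI[of _ \<pi>], rule exI[of _ \<tau>],
        intro conjI A B sbs bound pi(1) tau(1) frobX frobY maxA maxB)
qed

end
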